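(* Let $R$ be an associative ring with identity and involution $*$, and let $a\in R^{\#}\cap R^{\dagger}$. Let $\tau_a=\{a,\ a^{\#},\ (a^{\dagger})^*\}$ and $\gamma_a=\{a^{\dagger},\ a^*,\ (a^{\#})^*\}$. Then the following are equivalent: (1) $a\in R^{SEP}$; (2) $xx^{\dagger}a^2a^*a^{\dagger}\in PE(R)$ for some $x\in\gamma_a$; (3) $x^{\dagger}xa^2a^*a^{\dagger}\in PE(R)$ for some $x\in\tau_a$.
   Context: An involution on $R$ is a map $x\mapsto x^*$ with $(x^* )^*=x$, $(x+y)^*=x^*+y^*$, $(xy)^*=y^*x^*$. An element $a$ is Moore–Penrose invertible if there is $b$ with $aba=a$, $bab=b$, $(ab)^*=ab$, $(ba)^*=ba$; such $b$ is unique, denoted $a^{\dagger}$, and $R^{\dagger}$ is the set of such $a$ (all elements of $\tau_a\cup\gamma_a$ are Moore–Penrose invertible when $a\in R^{\#}\cap R^{\dagger}$). An element $a$ is group invertible if there is $b$ with $aba=a$, $bab=b$, $ab=ba$; such $b$ is unique, denoted $a^{\#}$, and $R^{\#}$ is the set of such $a$. $PE(R)=\{e\in R: e^2=e=e^*\}$ is the set of projections. For $a\in R^{\#}\cap R^{\dagger}$, $a$ is SEP if $a^*=a^{\dagger}=a^{\#}$; $R^{SEP}$ denotes the set of SEP elements. *)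

theory Defs
  imports Main
begin

definition is_involution :: "('a::ring_1 \<Rightarrow> 'a) \<Rightarrow> bool" where
  "is_involution star \<longleftrightarrow>
     (\<forall>x. star (star x) = x) \<and> (\<forall>x y. star (x + y) = star x + star y) \<and>
     (\<forall>x y. star (x * y) = star y * star x)"

definition is_mp_inverse :: "('a::ring_1 \<Rightarrow> 'a) \<Rightarrow> 'a \<Rightarrow> 'a \<Rightarrow> bool" where
  "is_mp_inverse star a b \<longleftrightarrow>
     a * b * a = a \<and> b * a * b = b \<and> star (a * b) = a * b \<and> star (b * a) = b * a"

definition mp_invertible :: "('a::ring_1 \<Rightarrow> 'a) \<Rightarrow> 'a \<Rightarrow> bool" where
  "mp_invertible star a \<longleftrightarrow> (\<exists>b. is_mp_inverse star a b)"

text \<open>The Moore--Penrose inverse (unique when it exists).\<close>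
definition mp_inv :: "('a::ring_1 \<Rightarrow> 'a) \<Rightarrow> 'a \<Rightarrow> 'a" where
  "mp_inv star a = (THE b. is_mp_inverse star a b)"

definition is_group_inverse :: "'a::ring_1 \<Rightarrow> 'a \<Rightarrow> bool" where
  "is_group_inverse a b \<longleftrightarrow> a * b * a = a \<and> b * a * b = b \<and> a * b = b * a"

definition group_invertible :: "'a::ring_1 \<Rightarrow> bool" where
  "group_invertible a \<longleftrightarrow> (\<exists>b. is_group_inverse a b)"

text \<open>The group inverse (unique when it exists).\<close>
definition group_inv :: "'a::ring_1 \<Rightarrow> 'a" where
  "group_inv a = (THE b. is_group_inverse a b)"

definition is_projection :: "('a::ring_1 \<Rightarrow> 'a) \<Rightarrow> 'a \<Rightarrow> bool" where
  "is_projection star e \<longleftrightarrow> e * e = e \<and> e = star e"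

definition is_SEP :: "('a::ring_1 \<Rightarrow> 'a) \<Rightarrow> 'a \<Rightarrow> bool" where
  "is_SEP star a \<longleftrightarrow> group_invertible a \<and> mp_invertible star a \<and>
     star a = mp_inv star a \<and> mp_inv star a = group_inv a"

end

theory Submission
  imports Defs
begin

lemma inv_st: "is_involution star \<Longrightarrow> star (star x) = x"
  by (simp add: is_involution_def)
lemma inv_mult: "is_involution star \<Longrightarrow> star (x * y) = star y * star x"
  by (simp add: is_involution_def)

lemma mp_unique:
  assumes inv: "is_involution star" and b: "is_mp_inverse star a b" and c: "is_mp_inverse star a c"
  shows "b = c"
proof -
  have b1: "a*b*a = a" "b*a*b = b" "star (a*b) = a*b" "star (b*a) = b*a" using b by (auto simp: is_mp_inverse_def)
  have c1: "a*c*a = a" "c*a*c = c" "star (a*c) = a*c" "star (c*a) = c*a" using c by (auto simp: is_mp_inverse_def)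
  have "a*b = star (a*c*a*b)" using b1 c1 by simp
  also have "\<dots> = star ((a*c)*(a*b))" by (simp add: mult.assoc)
  also have "\<dots> = a*b*(a*c)" using inv_mult[OF inv] b1 c1 by simp
  also have "\<dots> = a*c" using b1 by (simp add: mult.assoc[symmetric])
  finally have ab: "a*b = a*c" .
  have "b*a = star (b*a*c*a)" using b1 c1 by (simp add: mult.assoc)
  also have "\<dots> = star ((b*a)*(c*a))" by (simp add: mult.assoc)
  also have "\<dots> = c*a*(b*a)" using inv_mult[OF inv] b1 c1 by simp
  also have "\<dots> = c*a" using b1 by (simp add: mult.assoc)
  finally have ba: "b*a = c*a" .
  have "b = b*a*b" using b1 by simp
  also have "\<dots> = c*a*c" using ab ba by (metis mult.assoc)
  finally show ?thesis using c1 by simp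
qed

lemma mp_inv_eq:
  assumes "is_involution star" "is_mp_inverse star a b"
  shows "mp_inv star a = b"
  unfolding mp_inv_def using assms mp_unique by blast

lemma g_unique:
  assumes g: "is_group_inverse a g" and h: "is_group_inverse a h"
  shows "g = h"
proof -
  have g1: "a*g*a = a" "g*a*g = g" "a*g = g*a" using g by (auto simp: is_group_inverse_def)
  have h1: "a*h*a = a" "h*a*h = h" "a*h = h*a" using h by (auto simp: is_group_inverse_def)
  have "g*a = g*(a*h*a)" using h1 by simp
  also have "\<dots> = (a*g*a)*h" using g1 h1 by (metis mult.assoc)
  also have "\<dots> = h*a" using g1 h1 by simp
  finally have ga: "g*a = h*a" .
  have "g = h*a*g" using g1 ga by simp
  also have "\<dots> = h*(g*a)" using g1 by (metis mult.assoc)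
  also have "\<dots> = h" using ga h1 by (metis mult.assoc)
  finally show ?thesis .
qed

lemma group_inv_eq: "is_group_inverse a g \<Longrightarrow> group_inv a = g"
  unfolding group_inv_def using g_unique by blast

lemma mp_sym: "is_mp_inverse star a b \<Longrightarrow> is_mp_inverse star b a"
  by (auto simp: is_mp_inverse_def)

lemma mp_star:
  assumes inv: "is_involution star" and b: "is_mp_inverse star a b"
  shows "is_mp_inverse star (star a) (star b)"
proof -
  have b1: "a*b*a = a" "b*a*b = b" "star (a*b) = a*b" "star (b*a) = b*a" using b by (auto simp: is_mp_inverse_def)
  note m = inv_mult[OF inv] and s = inv_st[OF inv]
  have "star a * star b * star a = star (a*b*a)" using m by (simp add: mult.assoc)
  moreover have "star b * star a * star b = star (b*a*b)" using m by (simp add: mult.assoc)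
  moreover have "star (star a * star b) = star a * star b" using m s b1 by simp
  moreover have "star (star b * star a) = star b * star a" using m s b1 by simp
  ultimately show ?thesis using b1 by (simp add: is_mp_inverse_def)
qed


context
  fixes star :: "'a::ring_1 \<Rightarrow> 'a" and a b g :: 'a
  assumes inv: "is_involution star" and mpb: "is_mp_inverse star a b" and gig: "is_group_inverse a g"
begin

lemma St: "star (star x) = x" using inv_st[OF inv] .
lemma Sm: "star (x * y) = star y * star x" using inv_mult[OF inv] .

lemma A1: "a*(b*a) = a" using mpb by (simp add: is_mp_inverse_def mult.assoc)
lemma A1x: "a*(b*(a*x)) = a*x" by (metis A1 mult.assoc)
lemma B1: "b*(a*b) = b" using mpb by (simp add: is_mp_inverse_def mult.assoc)
lemma B1x: "b*(a*(b*x)) = b*x" by (metis B1 mult.assoc)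
lemma S1: "star (a*b) = a*b" using mpb by (simp add: is_mp_inverse_def)
lemma S2: "star (b*a) = b*a" using mpb by (simp add: is_mp_inverse_def)
lemma G1: "a*(g*a) = a" using gig by (simp add: is_group_inverse_def mult.assoc)
lemma G2: "g*(a*g) = g" using gig unfolding is_group_inverse_def by (metis mult.assoc)
lemma C: "a*g = g*a" using gig by (simp add: is_group_inverse_def)
lemma Cx: "a*(g*x) = g*(a*x)" by (metis C mult.assoc)
lemma Ga: "g*(a*a) = a" by (metis C G1 mult.assoc)
lemma Gax: "g*(a*(a*x)) = a*x" by (metis Ga mult.assoc)
lemma Ag: "a*(a*g) = a" by (metis C G1 mult.assoc)
lemma Agx: "a*(a*(g*x)) = a*x" by (metis Ag mult.assoc)

lemma D1: "b*(a*star a) = star a" by (metis A1 S2 Sm mult.assoc)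
lemma D3: "a*(b*star b) = star b" by (metis B1 S1 Sm mult.assoc)
lemma D5: "star a * star b = b*a" by (metis S2 Sm)
lemma D6: "star b * star a = a*b" by (metis S1 Sm)

lemma GG: "a*(g*g) = g" by (metis C G2 mult.assoc)
lemma GGx: "a*(g*(g*x)) = g*x" by (metis GG mult.assoc)

lemma ABg: "a*(b*g) = g"
proof -
  have "a*(b*g) = a*(b*(a*(g*g)))" by (simp only: GG)
  also have "\<dots> = a*(g*g)" by (rule A1x)
  also have "\<dots> = g" by (rule GG)
  finally show ?thesis .
qed

lemma g_mp: "is_mp_inverse star g (b*(a*(a*(a*b))))"
proof -
  have e1: "g*(b*(a*(a*(a*b)))) = a*b"
  proof -
    have "g*(b*(a*(a*(a*b)))) = (g*(a*g))*(b*(a*(a*(a*b))))" by (simp add: G2)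
    also have "\<dots> = g*(a*(g*(b*(a*(a*(a*b))))))" by (simp only: mult.assoc)
    also have "\<dots> = g*(g*(a*(b*(a*(a*(a*b))))))" by (simp add: Cx)
    also have "\<dots> = g*(g*(a*(a*(a*b))))" by (simp add: A1x)
    also have "\<dots> = a*b" by (simp add: Gax)
    finally show ?thesis .
  qed
  have e2: "b*(a*(a*(a*(b*g)))) = b*a"
  proof -
    have "b*(a*(a*(a*(b*g)))) = b*(a*(a*(a*(b*(a*(g*g))))))" by (simp add: GG)
    also have "\<dots> = b*(a*(a*(a*(g*g))))" by (simp add: A1x)
    also have "\<dots> = b*a" by (simp add: Agx Ag)
    finally show ?thesis .
  qed
  show ?thesis unfolding is_mp_inverse_def
    using e1 e2 S1 S2 by (simp add: mult.assoc G2 B1x ABg)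
qed

lemma core:
  "is_projection star (b*(a*(a*(a*(star a*b))))) \<longleftrightarrow> (star a = b \<and> b = g)"
proof
  define E where "E = b*(a*(a*(a*(star a*b))))"
  assume "is_projection star (b*(a*(a*(a*(star a*b)))))"
  hence Ee: "E*E = E" and Es: "E = star E" unfolding is_projection_def E_def by auto
  have "star E = star b * (a * (star a * (star a * (star a * star b))))"
    unfolding E_def by (simp add: Sm St mult.assoc)
  also have "\<dots> = a*(b*(star b * (a * (star a * (star a * (star a * star b))))))"
    by (metis D3 mult.assoc)
  also have "star b * (a * (star a * (star a * (star a * star b)))) = star E"
    unfolding E_def by (simp add: Sm St mult.assoc)
  finally have E1: "E = a*(b*E)" using Es by simp
  define Z where "Z = a*(star a*(star g*(star g*(star a*star b))))"
  have W4: "star a*(star a*(star g*(star g*(star a*x)))) = star a*x" for x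
  proof -
    have "star a*(star a*(star g*(star g*(star a*x)))) = star (a*(g*(g*(a*a)))) * x"
      by (simp add: Sm mult.assoc)
    also have "a*(g*(g*(a*a))) = a" by (simp add: Ga G1)
    finally show ?thesis by simp
  qed
  have wZ: "a*(a*(a*(star a*b)))*Z = a*(a*a)"
  proof -
    have "a*(a*(a*(star a*b)))*Z = a*(a*(a*(star a*(b*(a*(star a*(star g*(star g*(star a*star b)))))))))"
      unfolding Z_def by (simp add: mult.assoc)
    also have "\<dots> = a*(a*(a*(star a*(star a*(star g*(star g*(star a*star b)))))))"
      by (metis D1 mult.assoc)
    also have "\<dots> = a*(a*(a*(star a*star b)))" by (simp only: W4)
    also have "\<dots> = a*(a*(a*(b*a)))" by (simp only: D5)
    also have "\<dots> = a*(a*a)" by (simp only: A1)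
    finally show ?thesis .
  qed
  have "b*(a*(a*(a*(star a*b))))*Z = a*(b*(b*(a*(a*(a*(star a*b))))))*Z"
    using E1 unfolding E_def by simp
  hence "b*(a*(a*a)) = a*(b*(b*(a*(a*a))))" using wZ by (simp add: mult.assoc)
  hence "b*(a*(a*a))*(g*g) = a*(b*(b*(a*(a*a))))*(g*g)" by simp
  hence K3: "b*a = a*(b*(b*a))" by (simp add: mult.assoc Agx Ag)
  have K4: "b = a*(b*b)"
  proof -
    have "b = b*(a*b)" by (simp only: B1)
    also have "\<dots> = a*(b*(b*(a*b)))" using K3 by (metis mult.assoc)
    also have "\<dots> = a*(b*b)" by (simp only: B1)
    finally show ?thesis .
  qed
  have "g*(a*b) = b" by (subst K4, simp only: Gax, rule K4[symmetric])
  hence K5: "b*a = g*a" by (metis A1 mult.assoc)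
  have K6: "b*a = (b*a)*(a*b)"
  proof -
    have "b*a = star (a*(b*(b*a)))" using K3 S2 by simp
    also have "\<dots> = star (b*a) * star (a*b)" by (simp add: Sm mult.assoc)
    finally show ?thesis using S1 S2 by simp
  qed
  have K7: "a*b = b*a"
  proof -
    have "a*b = g*(a*(a*b))" by (simp only: Gax)
    also have "\<dots> = (b*a)*(a*b)" using K5 by (simp add: mult.assoc)
    finally show ?thesis using K6 by simp
  qed
  have K8: "b = g"
  proof -
    have "b = b*(a*b)" by (simp only: B1)
    also have "\<dots> = b*(a*g)" using K7 K5 C by simp
    also have "\<dots> = (g*a)*g" using K5 by (metis mult.assoc)
    finally show ?thesis using G2 by (simp add: mult.assoc)
  qed
  have K9: "star a*(g*a) = star a"
  proof -
    have "star a*(g*a) = star a * star (b*a)" using S2 K5 by simp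
    also have "\<dots> = star (b*(a*a))" by (simp add: Sm mult.assoc)
    also have "b*(a*a) = a" using K8 Ga by simp
    finally show ?thesis .
  qed
  have EG: "E = a*(a*(star a*g))" unfolding E_def using K8 by (simp add: Gax)
  have K10: "E*(a*(star b*(g*g))) = a*b"
  proof -
    have "E*(a*(star b*(g*g))) = a*(a*(star a*((g*a)*(star b*(g*g)))))" using EG by (simp add: mult.assoc)
    also have "\<dots> = a*(a*(star a*(star b*(g*g))))" using K9 by (metis mult.assoc)
    also have "\<dots> = a*(a*(b*(a*(g*g))))" using D5 by (metis mult.assoc)
    also have "\<dots> = a*(a*(g*g))" by (simp only: A1x)
    also have "\<dots> = a*g" by (simp only: Agx)
    finally show ?thesis using K8 by simp
  qed
  have K11: "E*(a*b) = E" unfolding E_def by (simp add: mult.assoc B1)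
  have K12: "E = a*b"
  proof -
    have "a*b = E*E*(a*(star b*(g*g)))" using K10 Ee by simp
    also have "\<dots> = E*(a*b)" using K10 by (simp add: mult.assoc)
    finally show ?thesis using K11 by simp
  qed
  have "a*(a*(star a*g))*a = a*b*a" using K12 EG by simp
  hence "a*(a*star a) = a" using K9 A1 by (simp add: mult.assoc)
  hence "g*(a*(a*star a)) = g*a" by simp
  hence K13: "a*star a = g*a" by (simp only: Gax)
  have aa: "a*star a*a = a" using K13 Ga by (simp add: mult.assoc)
  have "is_mp_inverse star a (star a)" unfolding is_mp_inverse_def
  proof (intro conjI)
    show "a*star a*a = a" by (rule aa)
    have "star (a*star a*a) = star a * star (star a) * star a" by (simp add: Sm mult.assoc)
    thus "star a * a * star a = star a" using aa St by simp
  qed (simp_all add: Sm St)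
  hence "star a = b" using mp_unique[OF inv _ mpb] by blast
  thus "star a = b \<and> b = g" using K8 by simp
next
  assume h: "star a = b \<and> b = g"
  have "b*(a*(a*(a*(star a*b)))) = g*(a*(a*(a*(g*g))))" using h by simp
  also have "\<dots> = a*(a*(g*g))" by (simp only: Gax)
  also have "\<dots> = a*b" using h by (simp only: Agx)
  finally have "b*(a*(a*(a*(star a*b)))) = a*b" .
  thus "is_projection star (b*(a*(a*(a*(star a*b)))))"
    unfolding is_projection_def using S1 by (simp add: mult.assoc A1x)
qed

lemma hg: "b*(a*(a*(a*(b*g)))) = b*a"
proof -
  have "b*(a*(a*(a*(b*g)))) = b*(a*(a*(a*(b*(a*(g*g))))))" by (simp only: GG)
  also have "\<dots> = b*(a*(a*(a*(g*g))))" by (simp only: A1x)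
  also have "\<dots> = b*a" by (simp only: Agx Ag)
  finally show ?thesis .
qed

lemma X1: "x \<in> {b, star a, star g} \<Longrightarrow> x * mp_inv star x = b*a"
proof -
  assume "x \<in> {b, star a, star g}"
  moreover have "b * mp_inv star b = b*a" using mp_inv_eq[OF inv mp_sym[OF mpb]] by simp
  moreover have "star a * mp_inv star (star a) = b*a"
    using mp_inv_eq[OF inv mp_star[OF inv mpb]] D5 by simp
  moreover have "star g * mp_inv star (star g) = b*a"
  proof -
    have "mp_inv star (star g) = star (b*(a*(a*(a*b))))"
      using mp_inv_eq[OF inv mp_star[OF inv g_mp]] .
    hence "star g * mp_inv star (star g) = star (b*(a*(a*(a*b))) * g)" by (simp add: Sm)
    also have "b*(a*(a*(a*b))) * g = b*a" using hg by (simp add: mult.assoc)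
    finally show ?thesis using S2 by simp
  qed
  ultimately show ?thesis by auto
qed

lemma X2: "x \<in> {a, g, star b} \<Longrightarrow> mp_inv star x * x = b*a"
proof -
  assume "x \<in> {a, g, star b}"
  moreover have "mp_inv star a * a = b*a" using mp_inv_eq[OF inv mpb] by simp
  moreover have "mp_inv star (star b) * star b = b*a"
    using mp_inv_eq[OF inv mp_star[OF inv mp_sym[OF mpb]]] D5 by simp
  moreover have "mp_inv star g * g = b*a"
    using mp_inv_eq[OF inv g_mp] hg by (simp add: mult.assoc)
  ultimately show ?thesis by auto
qed

end

theorem corollary2p6:
  fixes star :: "'a::ring_1 \<Rightarrow> 'a" and a :: 'a
  assumes "is_involution star"
    and "group_invertible a"
    and "mp_invertible star a"
  shows "(is_SEP star a \<longleftrightarrow>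
            (\<exists>x \<in> {mp_inv star a, star a, star (group_inv a)}.
               is_projection star (x * mp_inv star x * a ^ 2 * star a * mp_inv star a)))
       \<and> (is_SEP star a \<longleftrightarrow>
            (\<exists>x \<in> {a, group_inv a, star (mp_inv star a)}.
               is_projection star (mp_inv star x * x * a ^ 2 * star a * mp_inv star a)))"
proof -
  obtain b where mpb: "is_mp_inverse star a b" using assms(3) unfolding mp_invertible_def by blast
  obtain g where gig: "is_group_inverse a g" using assms(2) unfolding group_invertible_def by blast
  have mb: "mp_inv star a = b" using mp_inv_eq[OF assms(1) mpb] .
  have gg: "group_inv a = g" using group_inv_eq[OF gig] .
  have SEP: "is_SEP star a \<longleftrightarrow> is_projection star (b*(a*(a*(a*(star a*b)))))"
    using core[OF assms(1) mpb gig] assms(2,3) mb gg unfolding is_SEP_def by auto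
  have E1: "x * mp_inv star x * a ^ 2 * star a * b = b*(a*(a*(a*(star a*b))))"
    if "x \<in> {b, star a, star g}" for x
    using X1[OF assms(1) mpb gig that] mb by (simp add: power2_eq_square mult.assoc)
  have E2: "mp_inv star x * x * a ^ 2 * star a * b = b*(a*(a*(a*(star a*b))))"
    if "x \<in> {a, g, star b}" for x
    using X2[OF assms(1) mpb gig that] mb by (simp add: power2_eq_square mult.assoc)
  show ?thesis
  proof -
    have "(\<exists>x \<in> {b, star a, star g}. is_projection star (x * mp_inv star x * a ^ 2 * star a * b))
          \<longleftrightarrow> is_projection star (b*(a*(a*(a*(star a*b)))))"
      using E1 by (metis insertI1)
    moreover have "(\<exists>x \<in> {a, g, star b}. is_projection star (mp_inv star x * x * a ^ 2 * star a * b))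
          \<longleftrightarrow> is_projection star (b*(a*(a*(a*(star a*b)))))"
      using E2 by (metis insertI1)
    ultimately show ?thesis unfolding mb gg SEP by simp
  qed
qed

end
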